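(* A minimal prime graph complement has no vertex of degree $1$.
   Context: All graphs are finite and simple. A graph $G$ is a minimal prime graph complement if $G$ has at least $2$ vertices and: (1) the complement $\overline{G}$ is connected; (2) $G$ is triangle-free; (3) $G$ is $3$-colorable (has a proper vertex coloring with $3$ colors); (4) $G$ is edge-maximal with respect to (2) and (3), i.e. for any two distinct nonadjacent vertices $u,v$ of $G$, the graph obtained by adding the edge $uv$ to $G$ either contains a triangle or is not $3$-colorable. *)

theory Defs
  imports Main
begin

definition simple_graph :: "'a set \<Rightarrow> ('a \<Rightarrow> 'a \<Rightarrow> bool) \<Rightarrow> bool" where
  "simple_graph V E \<longleftrightarrow> finite V \<and> (\<forall>u v. E u v \<longrightarrow> u \<in> V \<and> v \<in> V)
     \<and> (\<forall>u v. E u v \<longrightarrow> E v u) \<and> (\<forall>v. \<not> E v v)"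

definition complement :: "'a set \<Rightarrow> ('a \<Rightarrow> 'a \<Rightarrow> bool) \<Rightarrow> 'a \<Rightarrow> 'a \<Rightarrow> bool" where
  "complement V E u v \<longleftrightarrow> u \<in> V \<and> v \<in> V \<and> u \<noteq> v \<and> \<not> E u v"

definition connected_graph :: "'a set \<Rightarrow> ('a \<Rightarrow> 'a \<Rightarrow> bool) \<Rightarrow> bool" where
  "connected_graph V E \<longleftrightarrow> (\<forall>u\<in>V. \<forall>v\<in>V. (\<lambda>x y. E x y)\<^sup>*\<^sup>* u v)"

definition triangle_free :: "'a set \<Rightarrow> ('a \<Rightarrow> 'a \<Rightarrow> bool) \<Rightarrow> bool" where
  "triangle_free V E \<longleftrightarrow> \<not> (\<exists>a\<in>V. \<exists>b\<in>V. \<exists>c\<in>V. E a b \<and> E b c \<and> E a c)"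

definition three_colorable :: "'a set \<Rightarrow> ('a \<Rightarrow> 'a \<Rightarrow> bool) \<Rightarrow> bool" where
  "three_colorable V E \<longleftrightarrow> (\<exists>c :: 'a \<Rightarrow> nat. (\<forall>v\<in>V. c v < 3)
       \<and> (\<forall>u\<in>V. \<forall>v\<in>V. E u v \<longrightarrow> c u \<noteq> c v))"

definition add_edge :: "('a \<Rightarrow> 'a \<Rightarrow> bool) \<Rightarrow> 'a \<Rightarrow> 'a \<Rightarrow> 'a \<Rightarrow> 'a \<Rightarrow> bool" where
  "add_edge E u v x y \<longleftrightarrow> E x y \<or> (x = u \<and> y = v) \<or> (x = v \<and> y = u)"

definition minimal_prime_graph_complement :: "'a set \<Rightarrow> ('a \<Rightarrow> 'a \<Rightarrow> bool) \<Rightarrow> bool" where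
  "minimal_prime_graph_complement V E \<longleftrightarrow>
     simple_graph V E \<and> card V \<ge> 2 \<and>
     connected_graph V (complement V E) \<and>
     triangle_free V E \<and> three_colorable V E \<and>
     (\<forall>u\<in>V. \<forall>v\<in>V. u \<noteq> v \<and> \<not> E u v \<longrightarrow>
        \<not> triangle_free V (add_edge E u v) \<or> \<not> three_colorable V (add_edge E u v))"

definition degree :: "'a set \<Rightarrow> ('a \<Rightarrow> 'a \<Rightarrow> bool) \<Rightarrow> 'a \<Rightarrow> nat" where
  "degree V E v = card {u \<in> V. E v u}"

end

theory Submission
  imports Defs
begin

theorem lemma3:
  assumes "minimal_prime_graph_complement V E"
  shows "\<forall>v\<in>V. degree V E v \<noteq> 1"
proof (intro ballI notI)
  fix v assume vV: "v \<in> V" and d: "degree V E v = 1"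
  have sg: "simple_graph V E" and conn: "connected_graph V (complement V E)"
    and tf: "triangle_free V E" and tc: "three_colorable V E"
    and maxl: "\<forall>u\<in>V. \<forall>w\<in>V. u \<noteq> w \<and> \<not> E u w \<longrightarrow>
        \<not> triangle_free V (add_edge E u w) \<or> \<not> three_colorable V (add_edge E u w)"
    using assms unfolding minimal_prime_graph_complement_def by auto
  have inV: "\<And>a b. E a b \<Longrightarrow> a \<in> V \<and> b \<in> V" and sym: "\<And>a b. E a b \<Longrightarrow> E b a"
    and irr: "\<And>a. \<not> E a a" using sg unfolding simple_graph_def by auto
  from d obtain u where U: "{x\<in>V. E v x} = {u}"
    unfolding degree_def by (metis card_1_singletonE)
  have Evu: "E v u" and uV: "u \<in> V" using U by auto
  have onlyu: "\<And>x. E v x \<Longrightarrow> x = u" using U inV by blast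
  have uv: "u \<noteq> v" using Evu irr by auto
  have all: "E u w" if wV: "w \<in> V" and wu: "w \<noteq> u" for w
  proof (cases "w = v")
    case True then show ?thesis using sym Evu by simp
  next
    case False
    show ?thesis
    proof (rule ccontr)
      assume nuw: "\<not> E u w"
      have nvw: "\<not> E v w" using onlyu wu by blast
      have "triangle_free V (add_edge E v w)"
        unfolding triangle_free_def
      proof (intro notI, elim bexE conjE)
        fix a b c assume "a \<in> V" "b \<in> V" "c \<in> V" and
          ab: "add_edge E v w a b" and bc: "add_edge E v w b c" and ac: "add_edge E v w a c"
        have nw: "\<And>x. E w x \<Longrightarrow> x \<noteq> u" using nuw sym by blast
        have nv: "\<And>x. E x v \<Longrightarrow> x = u" using onlyu sym by blast
        have common: "\<And>x. add_edge E v w x v \<Longrightarrow> add_edge E v w x w \<Longrightarrow> False"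
        proof -
          fix x assume h1: "add_edge E v w x v" and h2: "add_edge E v w x w"
          have "x \<noteq> v" using h1 irr nvw False unfolding add_edge_def by auto
          have "x \<noteq> w" using h2 irr nvw False sym unfolding add_edge_def by auto
          then have "E x v" using h1 unfolding add_edge_def by auto
          then have "x = u" using nv by blast
          moreover have "E x w" using h2 \<open>x \<noteq> v\<close> unfolding add_edge_def by auto
          ultimately show False using nuw by simp
        qed
        have symF: "\<And>x y. add_edge E v w x y \<Longrightarrow> add_edge E v w y x"
          using sym unfolding add_edge_def by blast
        show False
        proof (cases "E a b \<and> E b c \<and> E a c")
          case True then show ?thesis using tf \<open>a \<in> V\<close> \<open>b \<in> V\<close> \<open>c \<in> V\<close>
            unfolding triangle_free_def by blast
        next
          case F: False
          then have "(a = v \<and> b = w) \<or> (a = w \<and> b = v) \<or> (b = v \<and> c = w) \<or> (b = w \<and> c = v)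
             \<or> (a = v \<and> c = w) \<or> (a = w \<and> c = v)"
            using ab bc ac unfolding add_edge_def by blast
          then show ?thesis using common symF ab bc ac by metis
        qed
      qed
      moreover have "three_colorable V (add_edge E v w)"
      proof -
        obtain c where c3: "\<forall>x\<in>V. c x < (3::nat)" and cp: "\<forall>x\<in>V. \<forall>y\<in>V. E x y \<longrightarrow> c x \<noteq> c y"
          using tc unfolding three_colorable_def by blast
        define k where "k = (if c u \<noteq> 0 \<and> c w \<noteq> 0 then 0 else if c u \<noteq> 1 \<and> c w \<noteq> 1 then 1 else (2::nat))"
        have k: "k < 3" "k \<noteq> c u" "k \<noteq> c w" using c3 uV wV unfolding k_def by auto
        define c' where "c' = c(v := k)"
        have "\<forall>x\<in>V. c' x < 3" using c3 k unfolding c'_def by auto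
        moreover have "\<forall>x\<in>V. \<forall>y\<in>V. add_edge E v w x y \<longrightarrow> c' x \<noteq> c' y"
        proof (intro ballI impI)
          fix x y assume xV: "x \<in> V" and yV: "y \<in> V" and e: "add_edge E v w x y"
          show "c' x \<noteq> c' y"
          proof (cases "E x y")
            case True
            then show ?thesis using cp xV yV k onlyu sym irr unfolding c'_def
              by (metis fun_upd_apply)
          next
            case f2: False
            then have "(x = v \<and> y = w) \<or> (x = w \<and> y = v)" using e unfolding add_edge_def by auto
            then show ?thesis using k False unfolding c'_def by auto
          qed
        qed
        ultimately show ?thesis unfolding three_colorable_def by blast
      qed
      moreover have "v \<noteq> w" using False by auto
      ultimately show False using maxl vV wV nvw by blast
    qed
  qed
  have "(complement V E)\<^sup>*\<^sup>* u v" using conn uV vV unfolding connected_graph_def by blast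
  then show False
  proof (cases rule: converse_rtranclpE)
    case base then show ?thesis using uv by simp
  next
    case (step y)
    then show ?thesis using all unfolding complement_def by blast
  qed
qed

end
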